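(* Fix $\chi \in C_c^\infty((0,1))$. There is a function $g_\chi:(0,\infty) \to [0,\infty)$ depending only on $\chi$ such that: for every $N \in \mathbb N$, every $a \in \mathbb Z_N \simeq \{0,\dots,N-1\}$ and every $r \in (0,1/2)$ with $d(a/N, 0) \ge r$, $$\Big| \sum_{m=0}^{N-1} \exp\Big(\frac{2\pi i a m}{N}\Big) \chi\Big(\frac mN\Big)\Big| \le N \cdot g_\chi(Nr);$$ moreover, for every $n \ge 0$ there is $C_n>0$ (depending only on $\chi$) with $g_\chi(x) \le C_n x^{-n}$ for all $x>0$, and if $\chi \in \mathcal G^s_c((0,1))$ for some $s>1$ then there are $C, c > 0$ (depending only on $\chi$) with $g_\chi(x) \le C e^{-c x^{1/s}}$ for all $x > 0$.
   Context: On $[0,1]$ with $0$ and $1$ identified, $d(x,y) = \min\{|x-y|, 1 - |x-y|\}$. For $s>1$, $\mathcal G^s_c((0,1))$ is the set of $f \in C_c^\infty(\mathbb R)$ with $\operatorname{supp} f \subset (0,1)$ such that for every compact $K' \subset \mathbb R$ there is $C_{K',f}$ with $\sup_{x \in K'}|\partial^\alpha f(x)| \le C_{K',f}^{\alpha+1}(\alpha!)^s$ for all integers $\alpha \ge 0$. *)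

theory Defs
  imports "HOL-Analysis.Analysis"
begin

text \<open>Distance on [0,1] with 0 and 1 identified.\<close>
definition circ_dist :: "real \<Rightarrow> real \<Rightarrow> real" where
  "circ_dist x y = min \<bar>x - y\<bar> (1 - \<bar>x - y\<bar>)"

definition smooth_real :: "(real \<Rightarrow> real) \<Rightarrow> bool" where
  "smooth_real f \<longleftrightarrow> (\<forall>k x. ((deriv ^^ k) f) differentiable (at x))"

definition Cc_inf_01 :: "(real \<Rightarrow> real) \<Rightarrow> bool" where
  "Cc_inf_01 f \<longleftrightarrow> smooth_real f \<and> compact (closure {x. f x \<noteq> 0})
      \<and> closure {x. f x \<noteq> 0} \<subseteq> {0<..<1}"

definition Gevrey_c_01 :: "real \<Rightarrow> (real \<Rightarrow> real) \<Rightarrow> bool" where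
  "Gevrey_c_01 s f \<longleftrightarrow> Cc_inf_01 f \<and>
     (\<forall>K. compact K \<longrightarrow> (\<exists>C. \<forall>(\<alpha>::nat). \<forall>x\<in>K.
        \<bar>(deriv ^^ \<alpha>) f x\<bar> \<le> C ^ (\<alpha> + 1) * (fact \<alpha>) powr s))"

end

theory Submission
  imports Defs
begin

definition bdiff :: "real \<Rightarrow> (real \<Rightarrow> real) \<Rightarrow> real \<Rightarrow> real" where
  "bdiff h f t = f t - f (t - h)"

lemma deriv_bdiff:
  fixes g :: "real \<Rightarrow> real"
  assumes "\<And>x. g differentiable (at x)"
  shows "DERIV (bdiff h g) x :> deriv g x - deriv g (x - h)"
proof -
  have d1: "DERIV g x :> deriv g x" using assms DERIV_deriv_iff_real_differentiable by blast
  have d2: "DERIV g (x - h) :> deriv g (x - h)" using assms DERIV_deriv_iff_real_differentiable by blast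
  have d3: "DERIV (\<lambda>t. g (t - h)) x :> deriv g (x - h)"
  proof -
    have "((\<lambda>t. t - h) has_real_derivative 1) (at x)" by (auto intro!: derivative_eq_intros)
    from DERIV_chain'[OF this d2] show ?thesis by simp
  qed
  show ?thesis unfolding bdiff_def using DERIV_diff[OF d1 d3] by simp
qed

lemma funpow_deriv_bdiff:
  fixes f :: "real \<Rightarrow> real"
  assumes "smooth_real f"
  shows "(deriv ^^ k) (bdiff h f) = bdiff h ((deriv ^^ k) f)"
proof (induction k)
  case 0 then show ?case by simp
next
  case (Suc k)
  have diff: "\<And>x. ((deriv ^^ k) f) differentiable (at x)" using assms smooth_real_def by blast
  have "(deriv ^^ Suc k) (bdiff h f) = deriv (bdiff h ((deriv ^^ k) f))" using Suc by simp
  also have "\<dots> = bdiff h ((deriv ^^ Suc k) f)"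
  proof
    fix x show "deriv (bdiff h ((deriv ^^ k) f)) x = bdiff h ((deriv ^^ Suc k) f) x"
      using DERIV_imp_deriv[OF deriv_bdiff[OF diff]] by (simp add: bdiff_def)
  qed
  finally show ?case .
qed

lemma smooth_bdiff:
  assumes "smooth_real f"
  shows "smooth_real (bdiff h f)"
  unfolding smooth_real_def
proof (intro allI)
  fix k x
  have diff: "\<And>x. ((deriv ^^ k) f) differentiable (at x)" using assms smooth_real_def by blast
  show "(deriv ^^ k) (bdiff h f) differentiable at x"
    unfolding funpow_deriv_bdiff[OF assms]
    using deriv_bdiff[OF diff] real_differentiable_def by blast
qed

lemma mvt_bound:
  fixes g :: "real \<Rightarrow> real"
  assumes "\<And>x. g differentiable (at x)" "\<And>x. \<bar>deriv g x\<bar> \<le> B" "h \<ge> 0"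
  shows "\<bar>g t - g (t - h)\<bar> \<le> h * B"
proof (cases "h = 0")
  case True then show ?thesis by simp
next
  case False
  then have "t - h < t" using assms by simp
  moreover have "\<And>x. DERIV g x :> deriv g x" using assms DERIV_deriv_iff_real_differentiable by blast
  ultimately obtain z where "g t - g (t - h) = (t - (t - h)) * deriv g z"
    using MVT2[of "t - h" t g "deriv g"] by blast
  then have "\<bar>g t - g (t - h)\<bar> = h * \<bar>deriv g z\<bar>" using assms by (simp add: abs_mult)
  also have "\<dots> \<le> h * B" using assms by (simp add: mult_left_mono)
  finally show ?thesis .
qed

lemma bdiff_pow_bound:
  assumes "smooth_real f" "\<And>x. \<bar>(deriv ^^ k) f x\<bar> \<le> B" "h \<ge> 0"
  shows "\<bar>(bdiff h ^^ k) f t\<bar> \<le> h ^ k * B"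
  using assms(1,2)
proof (induction k arbitrary: f B)
  case 0 then show ?case by simp
next
  case (Suc k)
  have diff: "\<And>x. ((deriv ^^ k) f) differentiable (at x)" using Suc.prems smooth_real_def by blast
  have "\<And>x. \<bar>(deriv ^^ k) (bdiff h f) x\<bar> \<le> h * B"
    unfolding funpow_deriv_bdiff[OF Suc.prems(1)] bdiff_def
    using mvt_bound[OF diff _ assms(3)] Suc.prems(2) by simp
  from Suc.IH[OF smooth_bdiff[OF Suc.prems(1)] this]
  have "\<bar>(bdiff h ^^ k) (bdiff h f) t\<bar> \<le> h ^ Suc k * B" by (simp add: mult.assoc mult.commute mult.left_commute)
  moreover have "(bdiff h ^^ Suc k) f = (bdiff h ^^ k) (bdiff h f)" by (simp only: funpow_Suc_right o_def)
  ultimately show ?case by simp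
qed

lemma bdiff_pow_zero_left:
  assumes "\<And>s. s \<le> 0 \<Longrightarrow> f s = 0" "h \<ge> 0" "t \<le> 0"
  shows "(bdiff h ^^ k) f t = 0"
  using assms(1,3)
proof (induction k arbitrary: f t)
  case 0 then show ?case by simp
next
  case (Suc k)
  have "\<And>s. s \<le> 0 \<Longrightarrow> bdiff h f s = 0" using Suc.prems assms(2) by (simp add: bdiff_def)
  from Suc.IH[OF this Suc.prems(2)]
  have "(bdiff h ^^ k) (bdiff h f) t = 0" .
  moreover have "(bdiff h ^^ Suc k) f = (bdiff h ^^ k) (bdiff h f)" by (simp only: funpow_Suc_right o_def)
  ultimately show ?case by simp
qed

lemma bdiff_pow_zero_right:
  assumes "\<And>t. t \<ge> b \<Longrightarrow> f t = 0" "h \<ge> 0" "t \<ge> b + k * h"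
  shows "(bdiff h ^^ k) f t = 0"
  using assms(3)
proof (induction k arbitrary: t)
  case 0 then show ?case using assms(1) by simp
next
  case (Suc k)
  have "t \<ge> b + k * h" "t - h \<ge> b + k * h" using Suc.prems assms(2) by (auto simp: algebra_simps)
  then show ?case using Suc.IH by (simp add: bdiff_def)
qed

lemma deriv_zero_open:
  fixes f :: "real \<Rightarrow> real"
  assumes "open U" "\<And>x. x \<in> U \<Longrightarrow> f x = 0" "x \<in> U"
  shows "(deriv ^^ k) f x = 0"
  using assms(3)
proof (induction k arbitrary: x)
  case 0 then show ?case using assms by simp
next
  case (Suc k)
  have "DERIV (\<lambda>_. 0) x :> 0" by simp
  then have "DERIV ((deriv ^^ k) f) x :> 0"
    by (rule has_field_derivative_transform_within_open[OF _ assms(1) Suc.prems]) (use Suc.IH in auto)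
  then show ?case by (simp add: DERIV_imp_deriv)
qed

lemma sin_ge_half:
  assumes "0 \<le> x" "x \<le> pi / 2"
  shows "x / 2 \<le> sin x"
proof -
  have "\<bar>sin x - (\<Sum>m<3. sin_coeff m * x ^ m)\<bar> \<le> inverse (fact 3) * \<bar>x\<bar> ^ 3"
    by (rule Maclaurin_sin_bound)
  also have "(\<Sum>m<3. sin_coeff m * x ^ m) = x"
    by (simp add: eval_nat_numeral sin_coeff_def)
  finally have "\<bar>sin x - x\<bar> \<le> x ^ 3 / 6" using assms by (simp add: fact_numeral)
  then have 1: "x - x ^ 3 / 6 \<le> sin x" using abs_ge_minus_self[of "sin x - x"] by linarith
  have "pi \<le> 3.2" using pi_approx(2) by simp
  then have "x \<le> 1.6" using assms by linarith
  then have "x * x \<le> 1.6 * 1.6" using assms by (intro mult_mono) auto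
  then have "x * (x * x) \<le> x * (1.6 * 1.6)" using assms by (intro mult_left_mono) auto
  then have "x ^ 3 \<le> x * 2.56" by (simp add: power3_eq_cube)
  then show ?thesis using 1 assms by simp
qed

lemma norm_one_minus_exp:
  fixes t r :: real
  assumes "0 \<le> t" "t < 1" "r \<le> t" "r \<le> 1 - t" "0 < r"
  shows "2 * r \<le> cmod (1 - exp (complex_of_real (2 * pi * t) * \<i>))"
proof -
  let ?th = "2 * pi * t"
  have "(cmod (1 - exp (complex_of_real ?th * \<i>)))\<^sup>2 = (1 - cos ?th)\<^sup>2 + (sin ?th)\<^sup>2"
    by (simp add: cmod_power2 Re_exp Im_exp)
  also have "\<dots> = 2 - 2 * cos ?th" by (simp add: power2_eq_square algebra_simps)
  also have "cos ?th = 1 - 2 * (sin (pi * t))\<^sup>2" using cos_double_sin[of "pi * t"] by (simp add: mult.assoc)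
  finally have eq: "(cmod (1 - exp (complex_of_real ?th * \<i>)))\<^sup>2 = (2 * sin (pi * t))\<^sup>2"
    by (simp add: power2_eq_square)
  have aux: "r \<le> pi * u / 2" if "0 \<le> u" "r \<le> u" for u
  proof -
    have "3 * u \<le> pi * u" using pi_gt3 that by (intro mult_right_mono) auto
    then show ?thesis using that by linarith
  qed
  have "r \<le> sin (pi * t)"
  proof (cases "t \<le> 1/2")
    case True
    have "pi * t / 2 \<le> sin (pi * t)" using True assms by (intro sin_ge_half) auto
    moreover have "r \<le> pi * t / 2" using aux[of t] assms by simp
    ultimately show ?thesis by linarith
  next
    case False
    have "pi * (1 - t) / 2 \<le> sin (pi * (1 - t))" using False assms by (intro sin_ge_half) auto
    moreover have "sin (pi * (1 - t)) = sin (pi * t)" by (simp add: algebra_simps sin_diff)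
    moreover have "r \<le> pi * (1 - t) / 2" using aux[of "1 - t"] assms by simp
    ultimately show ?thesis by linarith
  qed
  then have "2 * r \<le> \<bar>2 * sin (pi * t)\<bar>" by simp
  also have "\<bar>2 * sin (pi * t)\<bar> = cmod (1 - exp (complex_of_real ?th * \<i>))"
    using eq by (metis abs_norm_cancel power2_eq_iff_nonneg abs_ge_zero norm_ge_zero real_sqrt_abs)
  finally show ?thesis .
qed

lemma sum_identity:
  fixes chi :: "real \<Rightarrow> real" and w :: complex and N :: nat
  assumes z: "\<And>t. t \<le> 0 \<or> t \<ge> 1 \<Longrightarrow> chi t = 0" and N: "N > 0"
  shows "(\<Sum>m<N + k. w ^ m * complex_of_real ((bdiff (1 / real N) ^^ k) chi (real m / real N)))
       = (1 - w) ^ k * (\<Sum>m<N. w ^ m * complex_of_real (chi (real m / real N)))"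
proof (induction k)
  case 0 then show ?case by simp
next
  case (Suc k)
  define h where "h = 1 / real N"
  define E where "E = (bdiff h ^^ k) chi"
  have h0: "h \<ge> 0" unfolding h_def by simp
  define L where "L = N + k"
  have ES: "(bdiff h ^^ Suc k) chi t = E t - E (t - h)" for t by (simp add: E_def bdiff_def)
  have EL: "E (real L / real N) = 0" unfolding E_def
    by (rule bdiff_pow_zero_right[of 1 chi h]) (use z h0 N in \<open>auto simp: L_def h_def field_simps\<close>)
  have E0: "E (- h) = 0" unfolding E_def
    by (rule bdiff_pow_zero_left) (use z h0 in auto)
  have shift: "real (Suc j) / real N - h = real j / real N" for j using N by (simp add: h_def field_simps)
  have "(\<Sum>m<Suc L. w ^ m * complex_of_real ((bdiff h ^^ Suc k) chi (real m / real N)))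
      = (\<Sum>m<Suc L. w ^ m * complex_of_real (E (real m / real N)))
        - (\<Sum>m<Suc L. w ^ m * complex_of_real (E (real m / real N - h)))"
    unfolding ES by (simp add: sum_subtractf algebra_simps)
  also have "(\<Sum>m<Suc L. w ^ m * complex_of_real (E (real m / real N)))
      = (\<Sum>m<L. w ^ m * complex_of_real (E (real m / real N)))" using EL by simp
  also have "(\<Sum>m<Suc L. w ^ m * complex_of_real (E (real m / real N - h)))
      = w * (\<Sum>m<L. w ^ m * complex_of_real (E (real m / real N)))"
    unfolding sum.lessThan_Suc_shift using E0 shift by (simp add: sum_distrib_left mult.assoc)
  finally have "(\<Sum>m<Suc L. w ^ m * complex_of_real ((bdiff h ^^ Suc k) chi (real m / real N)))
      = (1 - w) * (\<Sum>m<L. w ^ m * complex_of_real (E (real m / real N)))" by (simp add: algebra_simps)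
  then show ?case using Suc.IH by (simp add: L_def E_def h_def)
qed

lemma gevrey_decay:
  fixes A s :: real
  assumes A: "A \<ge> 1" and s: "s > 0"
  shows "\<exists>C>0. \<exists>c>0. \<forall>x>0. \<exists>k::nat.
           (real k + 1) * A ^ (k + 1) * (fact k) powr s / (2 * x) ^ k \<le> C * exp (- c * x powr (1 / s))"
proof -
  define Q where "Q = 2 * exp (-2) / A"
  have Q: "Q > 0" using A by (simp add: Q_def)
  define \<epsilon> where "\<epsilon> = Q powr (1 / s)"
  have eps: "\<epsilon> > 0" using Q by (simp add: \<epsilon>_def)
  have "\<forall>x>0. \<exists>k::nat. (real k + 1) * A ^ (k + 1) * (fact k) powr s / (2 * x) ^ k
          \<le> (A * exp 1) * exp (- \<epsilon> * x powr (1 / s))"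
  proof (intro allI impI)
    fix x :: real assume x: "x > 0"
    define y where "y = \<epsilon> * x powr (1 / s)"
    have y0: "y \<ge> 0" using eps x by (simp add: y_def)
    define k where "k = nat \<lfloor>y\<rfloor>"
    have ky: "real k \<le> y" "y < real k + 1" using y0 by (simp_all add: k_def)
    have ks: "real k powr s \<le> Q * x"
    proof -
      have "real k powr s \<le> y powr s" using ky s by (intro powr_mono2) auto
      also have "y powr s = \<epsilon> powr s * (x powr (1 / s)) powr s"
        unfolding y_def using eps x by (simp add: powr_mult)
      also have "\<dots> = Q * x" using s Q x by (simp add: \<epsilon>_def powr_powr)
      finally show ?thesis .
    qed
    have fk: "(fact k) powr s \<le> (Q * x) ^ k"
    proof -
      have "(fact k :: real) powr s \<le> (real k ^ k) powr s"
        using fact_le_power[of k, where 'a=real] s by (intro powr_mono2) auto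
      also have "(real k ^ k) powr s = (real k powr s) ^ k"
      proof (cases "k = 0")
        case True then show ?thesis by simp
      next
        case False
        then have "real k > 0" by simp
        then show ?thesis by (simp add: powr_power powr_realpow[symmetric] powr_powr mult.commute)
      qed
      also have "\<dots> \<le> (Q * x) ^ k" using ks by (intro power_mono) auto
      finally show ?thesis .
    qed
    have "(real k + 1) * A ^ (k + 1) * (fact k) powr s / (2 * x) ^ k
          \<le> (real k + 1) * A ^ (k + 1) * (Q * x) ^ k / (2 * x) ^ k"
      using fk A x by (intro divide_right_mono mult_left_mono) auto
    also have "\<dots> = (real k + 1) * A * (A * Q * x / (2 * x)) ^ k"
      by (simp add: power_mult_distrib power_divide)
    also have "A * Q * x / (2 * x) = exp (-2)" using A x by (simp add: Q_def)
    also have "(real k + 1) * A * exp (-2) ^ k = A * ((real k + 1) * exp (- real k)) * exp (- real k)"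
      by (simp add: exp_of_nat_mult[symmetric] exp_add[symmetric] mult_ac)
    also have "\<dots> \<le> A * 1 * exp (- real k)"
    proof -
      have "real k + 1 \<le> exp (real k)" using exp_ge_add_one_self[of "real k"] by (simp add: add.commute)
      then have "(real k + 1) * exp (- real k) \<le> 1" by (simp add: exp_minus field_simps)
      then show ?thesis using A by (intro mult_right_mono mult_left_mono) auto
    qed
    also have "\<dots> \<le> A * exp (1 - y)" using ky A by simp
    also have "\<dots> = (A * exp 1) * exp (- \<epsilon> * x powr (1 / s))"
      by (simp add: y_def exp_diff exp_minus field_simps)
    finally show "\<exists>k::nat. (real k + 1) * A ^ (k + 1) * (fact k) powr s / (2 * x) ^ k
          \<le> (A * exp 1) * exp (- \<epsilon> * x powr (1 / s))" by blast
  qed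
  moreover have "A * exp 1 > 0" using A by simp
  ultimately show ?thesis using eps by blast
qed

lemma chi_props:
  fixes chi :: "real \<Rightarrow> real"
  assumes "Cc_inf_01 chi"
  shows chi_zero: "\<And>t. t \<le> 0 \<or> t \<ge> 1 \<Longrightarrow> chi t = 0"
    and chi_deriv_out: "\<And>k x. x \<notin> closure {x. chi x \<noteq> 0} \<Longrightarrow> (deriv ^^ k) chi x = 0"
    and chi_bdd: "\<And>k. \<exists>B. \<forall>x. \<bar>(deriv ^^ k) chi x\<bar> \<le> B"
proof -
  let ?K = "closure {x. chi x \<noteq> 0}"
  have K: "compact ?K" "?K \<subseteq> {0<..<1}" using assms by (auto simp: Cc_inf_01_def)
  have sm: "smooth_real chi" using assms by (auto simp: Cc_inf_01_def)
  show z: "chi t = 0" if "t \<le> 0 \<or> t \<ge> 1" for t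
  proof (rule ccontr)
    assume "chi t \<noteq> 0"
    then have "t \<in> ?K" using closure_subset[of "{x. chi x \<noteq> 0}"] by blast
    then show False using K that by auto
  qed
  show d: "(deriv ^^ k) chi x = 0" if "x \<notin> ?K" for k x
  proof (rule deriv_zero_open[of "- ?K"])
    show "open (- ?K)" by (simp add: open_Compl)
    show "x \<in> - ?K" using that by simp
    show "chi y = 0" if "y \<in> - ?K" for y
    proof (rule ccontr)
      assume "chi y \<noteq> 0"
      then have "y \<in> ?K" using closure_subset[of "{x. chi x \<noteq> 0}"] by blast
      then show False using that by simp
    qed
  qed
  show "\<exists>B. \<forall>x. \<bar>(deriv ^^ k) chi x\<bar> \<le> B" for k
  proof -
    have "continuous_on ?K ((deriv ^^ k) chi)"
      using sm by (intro continuous_at_imp_continuous_on ballI differentiable_imp_continuous_within)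
        (auto simp: smooth_real_def)
    then have "compact ((deriv ^^ k) chi ` ?K)" using K by (intro compact_continuous_image)
    then have "bounded ((deriv ^^ k) chi ` ?K)" by (rule compact_imp_bounded)
    then obtain B where B: "\<forall>y\<in>(deriv ^^ k) chi ` ?K. norm y \<le> B"
      unfolding bounded_iff by blast
    have "\<bar>(deriv ^^ k) chi x\<bar> \<le> max B 0" for x
      using B d[of x] by (cases "x \<in> ?K") auto
    then show ?thesis by blast
  qed
qed

theorem lemma1:
  fixes chi :: "real \<Rightarrow> real"
  assumes "Cc_inf_01 chi"
  shows "\<exists>g :: real \<Rightarrow> real. (\<forall>x>0. g x \<ge> 0) \<and>
    (\<forall>(N::nat) (a::nat) (r::real). a < N \<and> 0 < r \<and> r < 1/2 \<and>
        circ_dist (real a / real N) 0 \<ge> r \<longrightarrow>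
        cmod (\<Sum>m<N. exp (2 * pi * \<i> * of_nat a * of_nat m / of_nat N)
                        * complex_of_real (chi (real m / real N)))
          \<le> real N * g (real N * r)) \<and>
    (\<forall>n::nat. \<exists>C>0. \<forall>x>0. g x \<le> C * x powr (- real n)) \<and>
    (\<forall>s>1. Gevrey_c_01 s chi \<longrightarrow>
        (\<exists>C>0. \<exists>c>0. \<forall>x>0. g x \<le> C * exp (- c * x powr (1 / s))))"
proof -
  let ?K = "closure {x. chi x \<noteq> 0}"
  have sm: "smooth_real chi" using assms by (auto simp: Cc_inf_01_def)
  define M where "M k = (SUP x. \<bar>(deriv ^^ k) chi x\<bar>)" for k
  have bddM: "bdd_above (range (\<lambda>x. \<bar>(deriv ^^ k) chi x\<bar>))" for k
    using chi_bdd[OF assms, of k] by (auto simp: bdd_above_def)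
  have leM: "\<bar>(deriv ^^ k) chi x\<bar> \<le> M k" for k x
    unfolding M_def by (rule cSUP_upper[OF _ bddM]) auto
  have M0: "M k \<ge> 0" for k using leM[of k 0] by linarith
  define trm where "trm k x = (real k + 1) * M k / (2 * x) ^ k" for k x
  define g where "g x = (INF k. trm k x)" for x
  have trm0: "trm k x \<ge> 0" if "x > 0" for k x using that M0 by (simp add: trm_def)
  have bddT: "bdd_below (range (\<lambda>k. trm k x))" if "x > 0" for x
    using trm0[OF that] by (auto simp: bdd_below_def)
  have g_le: "g x \<le> trm k x" if "x > 0" for k x
    unfolding g_def by (rule cINF_lower[OF bddT[OF that]]) auto
  have g_ge: "y \<le> g x" if "\<And>k. y \<le> trm k x" for x y
    unfolding g_def by (rule cINF_greatest) (use that in auto)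
  have P1: "\<forall>x>0. g x \<ge> 0"
  proof (intro allI impI)
    fix x :: real assume "x > 0"
    show "0 \<le> g x" by (rule g_ge) (rule trm0[OF \<open>x > 0\<close>])
  qed
  have P2: "cmod (\<Sum>m<N. exp (2 * pi * \<i> * of_nat a * of_nat m / of_nat N)
                        * complex_of_real (chi (real m / real N)))
          \<le> real N * g (real N * r)"
    if hyp: "a < N" "0 < r" "r < 1/2" "circ_dist (real a / real N) 0 \<ge> r" for N a r
  proof -
    have N: "N > 0" "real N > 0" using hyp by auto
    define t where "t = real a / real N"
    have t: "0 \<le> t" "t < 1" using hyp N by (auto simp: t_def field_simps)
    have rt: "r \<le> t" "r \<le> 1 - t" using hyp(4) t by (auto simp: circ_dist_def t_def[symmetric])
    define w where "w = exp (complex_of_real (2 * pi * t) * \<i>)"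
    have w1: "cmod w = 1" by (simp add: w_def)
    have wlow: "2 * r \<le> cmod (1 - w)" unfolding w_def using norm_one_minus_exp[OF t rt hyp(2)] .
    define S where "S = (\<Sum>m<N. w ^ m * complex_of_real (chi (real m / real N)))"
    have Seq: "(\<Sum>m<N. exp (2 * pi * \<i> * of_nat a * of_nat m / of_nat N)
                        * complex_of_real (chi (real m / real N))) = S"
    proof -
      have "exp (2 * pi * \<i> * of_nat a * of_nat m / of_nat N) = w ^ m" for m
      proof -
        have "2 * pi * \<i> * of_nat a * of_nat m / of_nat N = of_nat m * (complex_of_real (2 * pi * t) * \<i>)"
          using N by (simp add: t_def field_simps)
        then show ?thesis by (simp add: w_def exp_of_nat_mult)
      qed
      then show ?thesis by (simp add: S_def)
    qed
    have "cmod S / real N \<le> trm k (real N * r)" for k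
    proof -
      define h where "h = 1 / real N"
      have h0: "h \<ge> 0" by (simp add: h_def)
      have Db: "\<bar>(bdiff h ^^ k) chi y\<bar> \<le> h ^ k * M k" for y
        by (rule bdiff_pow_bound[OF sm leM h0])
      have "(2 * r) ^ k * cmod S \<le> cmod (1 - w) ^ k * cmod S"
        using wlow hyp by (intro mult_right_mono power_mono) auto
      also have "\<dots> = cmod ((1 - w) ^ k * S)" by (simp add: norm_mult norm_power)
      also have "(1 - w) ^ k * S = (\<Sum>m<N + k. w ^ m * complex_of_real ((bdiff h ^^ k) chi (real m / real N)))"
        unfolding S_def h_def by (rule sum_identity[symmetric, OF chi_zero[OF assms] N(1)])
      also have "cmod \<dots> \<le> (\<Sum>m<N + k. cmod (w ^ m * complex_of_real ((bdiff h ^^ k) chi (real m / real N))))"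
        by (rule norm_sum)
      also have "\<dots> \<le> (\<Sum>m<N + k. h ^ k * M k)"
        by (intro sum_mono) (simp add: norm_mult norm_power w1 Db)
      also have "\<dots> = real (N + k) * (h ^ k * M k)" by simp
      also have "\<dots> \<le> real N * (real k + 1) * (h ^ k * M k)"
      proof -
        have "real (N + k) \<le> real N * (real k + 1)" using N
        proof -
          have "1 * real k \<le> real N * real k" using N by (intro mult_right_mono) auto
          then show ?thesis by (simp add: algebra_simps)
        qed
        then show ?thesis using M0 h0 by (intro mult_right_mono) auto
      qed
      finally have A: "(2 * r) ^ k * cmod S \<le> real N * (real k + 1) * (h ^ k * M k)" .
      have pos: "(2 * r) ^ k > 0" using hyp by simp
      have "cmod S / real N \<le> (real k + 1) * (h ^ k * M k) / (2 * r) ^ k"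
        using A pos N by (simp add: field_simps)
      also have "\<dots> = trm k (real N * r)"
        using N by (simp add: trm_def h_def power_mult_distrib power_divide field_simps)
      finally show ?thesis .
    qed
    then have "cmod S / real N \<le> g (real N * r)" by (rule g_ge)
    then show ?thesis using Seq N by (simp add: field_simps)
  qed
  have P3: "\<exists>C>0. \<forall>x>0. g x \<le> C * x powr (- real n)" for n
  proof (intro exI[of _ "(real n + 1) * M n / 2 ^ n + 1"] conjI allI impI)
    have "0 \<le> (real n + 1) * M n / 2 ^ n" using M0[of n] by simp
    then show "(real n + 1) * M n / 2 ^ n + 1 > 0" by linarith
    fix x :: real assume x: "x > 0"
    have "g x \<le> trm n x" by (rule g_le[OF x])
    also have "\<dots> = (real n + 1) * M n / 2 ^ n * x powr (- real n)"
      using x by (simp add: trm_def powr_minus powr_realpow power_mult_distrib field_simps)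
    also have "\<dots> \<le> ((real n + 1) * M n / 2 ^ n + 1) * x powr (- real n)"
      using x by (intro mult_right_mono) auto
    finally show "g x \<le> ((real n + 1) * M n / 2 ^ n + 1) * x powr (- real n)" .
  qed
  have P4: "\<exists>C>0. \<exists>c>0. \<forall>x>0. g x \<le> C * exp (- c * x powr (1 / s))"
    if s: "s > 1" and G: "Gevrey_c_01 s chi" for s
  proof -
    have "compact ?K" using assms by (simp add: Cc_inf_01_def)
    moreover have "\<forall>K. compact K \<longrightarrow> (\<exists>C. \<forall>(\<alpha>::nat). \<forall>x\<in>K.
        \<bar>(deriv ^^ \<alpha>) chi x\<bar> \<le> C ^ (\<alpha> + 1) * (fact \<alpha>) powr s)"
      using G by (simp add: Gevrey_c_01_def)
    ultimately obtain C0 where C0': "\<forall>(\<alpha>::nat). \<forall>x\<in>?K.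
        \<bar>(deriv ^^ \<alpha>) chi x\<bar> \<le> C0 ^ (\<alpha> + 1) * (fact \<alpha>) powr s"
      by blast
    have C0: "\<bar>(deriv ^^ k) chi x\<bar> \<le> C0 ^ (k + 1) * (fact k) powr s" if "x \<in> ?K" for k x
      using C0' that by blast
    define A where "A = max 1 \<bar>C0\<bar>"
    have A: "A \<ge> 1" by (simp add: A_def)
    have MA: "M k \<le> A ^ (k + 1) * (fact k) powr s" for k
      unfolding M_def
    proof (rule cSUP_least)
      fix x
      have "C0 ^ (k + 1) \<le> \<bar>C0\<bar> ^ (k + 1)" by (metis abs_ge_self power_abs)
      also have "\<dots> \<le> A ^ (k + 1)" by (rule power_mono) (auto simp: A_def)
      finally have "C0 ^ (k + 1) \<le> A ^ (k + 1)" .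
      then have pr: "C0 ^ (k + 1) * (fact k) powr s \<le> A ^ (k + 1) * (fact k) powr s"
        by (intro mult_right_mono) auto
      have nn: "0 \<le> A ^ (k + 1) * (fact k) powr s" using A by simp
      show "\<bar>(deriv ^^ k) chi x\<bar> \<le> A ^ (k + 1) * (fact k) powr s"
      proof (cases "x \<in> ?K")
        case True
        then show ?thesis using order_trans[OF C0[of x k] pr] by blast
      next
        case False
        then show ?thesis using chi_deriv_out[OF assms, of x k] nn by simp
      qed
    qed auto
    obtain C c where Cc: "C > 0" "c > 0"
      and D: "\<forall>x>0. \<exists>k::nat. (real k + 1) * A ^ (k + 1) * (fact k) powr s / (2 * x) ^ k \<le> C * exp (- c * x powr (1 / s))"
      using gevrey_decay[OF A, of s] s by (metis less_trans zero_less_one)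
    have "g x \<le> C * exp (- c * x powr (1 / s))" if x: "x > 0" for x
    proof -
      obtain k where k: "(real k + 1) * A ^ (k + 1) * (fact k) powr s / (2 * x) ^ k \<le> C * exp (- c * x powr (1 / s))"
        using D x by blast
      have "g x \<le> trm k x" by (rule g_le[OF x])
      also have "\<dots> \<le> (real k + 1) * A ^ (k + 1) * (fact k) powr s / (2 * x) ^ k"
      proof -
        have "(real k + 1) * M k \<le> (real k + 1) * (A ^ (k + 1) * (fact k) powr s)"
          using MA[of k] by (intro mult_left_mono) auto
        then have "(real k + 1) * M k / (2 * x) ^ k \<le> (real k + 1) * (A ^ (k + 1) * (fact k) powr s) / (2 * x) ^ k"
          using x by (intro divide_right_mono) auto
        then show ?thesis by (simp add: trm_def mult.assoc)
      qed
      finally show ?thesis using k by linarith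
    qed
    then show ?thesis using Cc by blast
  qed
  show ?thesis
    apply (intro exI[of _ g] conjI)
    subgoal by (rule P1)
    subgoal apply (intro allI impI) apply (elim conjE) apply (rule P2) apply assumption+ done
    subgoal using P3 by blast
    subgoal apply (intro allI impI) apply (rule P4) apply assumption+ done
    done
qed

end
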